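(* Let $\lambda>0$, $d_v>0$, $\epsilon\ge0$, $m=\lambda\pi d_v^2$, $k\ge0$, and let $\tilde{\mathbf x}_1,\dots,\tilde{\mathbf x}_k\in\mathbb R^2$ be given, with $f(\mathbf x)$ the set of their orderings. With $A_i=\mathbf b(\tilde{\mathbf x}_i,\epsilon)$ the closed Euclidean ball of radius $\epsilon$ about $\tilde{\mathbf x}_i$ and $|A_i|$ its Lebesgue measure, $$\mathbb P\big[\Delta_s(f(\mathbf x),F(\mathbf 0))\le\epsilon\big]\le m^k e^{-m}\prod_{i=1}^k\frac{|A_i|}{\pi d_v^2}.$$
   Context: Landmarks seen from the origin are the points of a homogeneous Poisson point process $\Phi_{\mathbf 0}$ of intensity $\lambda$ on $\mathbb R^2$; a landmark is visible from $\mathbf 0$ if its distance to $\mathbf 0$ is at most $d_v$, and $N_{\mathbf 0}$ is the number of visible landmarks. The random measurement $F(\mathbf 0)$ is the set of all $N_{\mathbf 0}\times 2$ matrices whose rows are the positions of the visible landmarks (relative to $\mathbf 0$) listed in some order; $f(\mathbf x)$ is the set of all $k\times2$ matrices whose rows are $\tilde{\mathbf x}_1,\dots,\tilde{\mathbf x}_k$ in some order. For matrices, $\Delta_v(\mathbf v,\mathbf w)=\max_i\|\mathbf v_{i,:}-\mathbf w_{i,:}\|_2$ if they have the same number of rows (equal to $0$ if both have zero rows) and $\infty$ otherwise; $\Delta_s(f,F)=\min_{\mathbf v\in f,\mathbf w\in F}\Delta_v(\mathbf v,\mathbf w)$. *)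

theory Defs
  imports "HOL-Probability.Probability"
begin

type_synonym pt = "real ^ 2"

definition poisson_pp :: "'w measure \<Rightarrow> real \<Rightarrow> ('w \<Rightarrow> pt set) \<Rightarrow> bool" where
  "poisson_pp M lam Phi \<longleftrightarrow>
     prob_space M \<and>
     (\<forall>\<omega>\<in>space M. \<forall>B. bounded B \<longrightarrow> finite (Phi \<omega> \<inter> B)) \<and>
     (\<forall>B \<in> sets lborel. bounded B \<longrightarrow>
        (\<lambda>\<omega>. card (Phi \<omega> \<inter> B)) \<in> measurable M (count_space UNIV) \<and>
        (\<forall>n::nat. measure M {\<omega>\<in>space M. card (Phi \<omega> \<inter> B) = n}
            = exp (- (lam * measure lborel B)) * (lam * measure lborel B) ^ n / fact n)) \<and>
     (\<forall>(I::nat set) B. finite I \<longrightarrow> (\<forall>i\<in>I. B i \<in> sets lborel \<and> bounded (B i)) \<longrightarrow>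
        disjoint_family_on B I \<longrightarrow>
        prob_space.indep_vars M (\<lambda>_. count_space UNIV) (\<lambda>i \<omega>. card (Phi \<omega> \<inter> B i)) I)"

text \<open>Delta_v on matrices, represented as lists of rows (points in the plane).\<close>
definition Delta_v :: "pt list \<Rightarrow> pt list \<Rightarrow> ereal" where
  "Delta_v v w = (if length v = length w then
       (if v = [] then 0 else ereal (Max {norm (v ! i - w ! i) | i. i < length v}))
     else \<infinity>)"

definition Delta_s :: "pt list set \<Rightarrow> pt list set \<Rightarrow> ereal" where
  "Delta_s f F = (INF v\<in>f. INF w\<in>F. Delta_v v w)"

definition orderings :: "pt list \<Rightarrow> pt list set" where
  "orderings xs = {v. mset v = mset xs}"

text \<open>F(0): all orderings (as row lists) of the landmarks of the configuration P that are
  within distance dv of the origin.\<close>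
definition meas_F :: "real \<Rightarrow> pt set \<Rightarrow> pt list set" where
  "meas_F dv P = {w. distinct w \<and> set w = P \<inter> cball 0 dv}"

end

theory Submission
  imports Defs "HOL-Combinatorics.List_Permutation"
begin

definition idx :: "real \<Rightarrow> pt \<Rightarrow> int \<times> int" where
  "idx s y = (\<lfloor>y$1 / s\<rfloor>, \<lfloor>y$2 / s\<rfloor>)"

definition cell :: "real \<Rightarrow> real \<Rightarrow> int \<times> int \<Rightarrow> pt set" where
  "cell dv s c = {y \<in> cball 0 dv. idx s y = c}"

definition Ix :: "real \<Rightarrow> real \<Rightarrow> (int \<times> int) set" where
  "Ix dv s = {-\<lceil>dv/s\<rceil>..\<lceil>dv/s\<rceil>} \<times> {-\<lceil>dv/s\<rceil>..\<lceil>dv/s\<rceil>}"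

lemma finite_Ix: "finite (Ix dv s)"
  by (simp add: Ix_def)

lemma idx_in_Ix:
  assumes "s > 0" "y \<in> cball 0 dv"
  shows "idx s y \<in> Ix dv s"
proof -
  have n: "norm y \<le> dv" using assms by simp
  have b: "\<bar>y$j\<bar> \<le> dv" for j using component_le_norm_cart[of y j] n by linarith
  have "\<lfloor>y$j/s\<rfloor> \<in> {-\<lceil>dv/s\<rceil>..\<lceil>dv/s\<rceil>}" for j
  proof -
    have "-dv \<le> y$j" "y$j \<le> dv" using b[of j] by auto
    then have "-dv/s \<le> y$j/s" "y$j/s \<le> dv/s" using assms(1)
      using divide_right_mono[of "-dv" "y$j" s] divide_right_mono[of "y$j" dv s] by auto
    then have "\<lfloor>y$j/s\<rfloor> \<le> \<lceil>dv/s\<rceil>" "-\<lceil>dv/s\<rceil> \<le> \<lfloor>y$j/s\<rfloor>"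
      apply (meson floor_le_ceiling le_floor_iff order.trans floor_mono ceiling_correct)
      by (smt (verit, ccfv_SIG) \<open>- dv / s \<le> y $ j / s\<close> ceiling_correct ceiling_minus floor_mono le_floor_iff minus_divide_left)
    then show ?thesis by simp
  qed
  then show ?thesis by (simp add: Ix_def idx_def)
qed

lemma cell_sets: "cell dv s c \<in> sets lborel"
proof -
  have "cell dv s c = cball 0 dv \<inter> {y. \<lfloor>y$1 / s\<rfloor> = fst c \<and> \<lfloor>y$2 / s\<rfloor> = snd c}"
    by (cases c) (auto simp: cell_def idx_def)
  also have "\<dots> \<in> sets lborel"
    by measurable
  finally show ?thesis .
qed

lemma cell_bounded: "bounded (cell dv s c)"
  by (rule bounded_subset[of "cball 0 dv"]) (auto simp: cell_def)

lemma cell_disj: "c \<noteq> d \<Longrightarrow> cell dv s c \<inter> cell dv s d = {}"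
  by (auto simp: cell_def)

lemma cell_union: "s > 0 \<Longrightarrow> (\<Union>c\<in>Ix dv s. cell dv s c) = cball 0 dv"
  using idx_in_Ix by (auto simp: cell_def)

lemma cell_diam:
  assumes "s > 0" "y \<in> cell dv s c" "z \<in> cell dv s c"
  shows "norm (y - z) < 2 * s"
proof -
  have e: "\<lfloor>y$j/s\<rfloor> = \<lfloor>z$j/s\<rfloor>" for j :: 2
    using assms(2,3) exhaust_2[of j] by (auto simp: cell_def idx_def)
  have "\<bar>y$j/s - z$j/s\<bar> < 1" for j
    using e[of j] by linarith
  then have "\<bar>y$j - z$j\<bar> < s" for j
    using assms(1) by (simp add: diff_divide_distrib[symmetric] abs_divide)
  then have "\<bar>(y - z)$1\<bar> < s" "\<bar>(y - z)$2\<bar> < s" by simp_all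
  moreover have "norm (y - z) \<le> \<bar>(y - z)$1\<bar> + \<bar>(y - z)$2\<bar>"
    using norm_le_l1_cart[of "y - z"] by (simp add: sum_2)
  ultimately show ?thesis by linarith
qed

lemma content_cball2: "r \<ge> 0 \<Longrightarrow> measure lborel (cball (c::pt) r) = pi * r ^ 2"
  using content_cball[of r c] by (simp add: unit_ball_vol_2)

lemma cell_measure_sum:
  assumes "s > 0" "dv \<ge> 0"
  shows "(\<Sum>c\<in>Ix dv s. measure lborel (cell dv s c)) = pi * dv ^ 2"
proof -
  have "measure lborel (\<Union>c\<in>Ix dv s. cell dv s c) = (\<Sum>c\<in>Ix dv s. measure lborel (cell dv s c))"
  proof (rule measure_finite_Union)
    show "finite (Ix dv s)" by (rule finite_Ix)
    show "(\<lambda>c. cell dv s c) ` Ix dv s \<subseteq> sets lborel" using cell_sets by blast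
    show "disjoint_family_on (\<lambda>c. cell dv s c) (Ix dv s)"
      by (auto simp: disjoint_family_on_def cell_disj)
    show "\<And>c. c \<in> Ix dv s \<Longrightarrow> emeasure lborel (cell dv s c) \<noteq> \<infinity>"
      using emeasure_bounded_finite[OF cell_bounded] by (simp add: less_top)
  qed
  then show ?thesis using cell_union[OF assms(1)] content_cball2[OF assms(2)] by simp
qed


definition pois :: "real \<Rightarrow> real \<Rightarrow> nat \<Rightarrow> real" where
  "pois lam mu n = exp (- (lam * mu)) * (lam * mu) ^ n / fact n"

lemma poisson_config:
  fixes J :: "'c set" and B :: "'c \<Rightarrow> pt set" and a :: "'c \<Rightarrow> nat"
  assumes P: "poisson_pp M lam Phi" and J: "finite J"
    and B: "\<And>c. c \<in> J \<Longrightarrow> B c \<in> sets lborel \<and> bounded (B c)"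
    and D: "disjoint_family_on B J"
  shows "{\<omega>\<in>space M. \<forall>c\<in>J. card (Phi \<omega> \<inter> B c) = a c} \<in> sets M \<and>
    measure M {\<omega>\<in>space M. \<forall>c\<in>J. card (Phi \<omega> \<inter> B c) = a c}
     = (\<Prod>c\<in>J. pois lam (measure lborel (B c)) (a c))"
proof -
  interpret prob_space M using P by (simp add: poisson_pp_def)
  have meas: "(\<lambda>\<omega>. card (Phi \<omega> \<inter> B c)) \<in> measurable M (count_space UNIV)" if "c \<in> J" for c
    using P B[OF that] by (simp add: poisson_pp_def)
  have pc: "measure M {\<omega>\<in>space M. card (Phi \<omega> \<inter> B c) = n} = pois lam (measure lborel (B c)) n"
    if "c \<in> J" for c n
    using P B[OF that] by (simp add: poisson_pp_def pois_def)
  have ev: "{\<omega>\<in>space M. card (Phi \<omega> \<inter> B c) = n} \<in> sets M" if "c \<in> J" for c n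
  proof -
    have "(\<lambda>\<omega>. card (Phi \<omega> \<inter> B c)) -` {n} \<inter> space M \<in> sets M"
      by (rule measurable_sets[OF meas[OF that]]) simp
    moreover have "(\<lambda>\<omega>. card (Phi \<omega> \<inter> B c)) -` {n} \<inter> space M = {\<omega>\<in>space M. card (Phi \<omega> \<inter> B c) = n}"
      by auto
    ultimately show ?thesis by simp
  qed
  show ?thesis
  proof (cases "J = {}")
    case True
    then show ?thesis by (simp add: prob_space)
  next
    case False
    obtain h where h: "bij_betw h {0..<card J} J" using ex_bij_betw_nat_finite[OF J] by blast
    define I where "I = {0..<card J}"
    have hI: "i \<in> I \<Longrightarrow> h i \<in> J" for i using h by (auto simp: I_def bij_betw_def)
    have I0: "I \<noteq> {}" using False J by (auto simp: I_def)
    have ind: "indep_vars (\<lambda>_. count_space UNIV) (\<lambda>i \<omega>. card (Phi \<omega> \<inter> B (h i))) I"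
    proof -
      have "\<forall>(I::nat set) B. finite I \<longrightarrow> (\<forall>i\<in>I. B i \<in> sets lborel \<and> bounded (B i)) \<longrightarrow>
        disjoint_family_on B I \<longrightarrow>
        indep_vars (\<lambda>_. count_space UNIV) (\<lambda>i \<omega>. card (Phi \<omega> \<inter> B i)) I"
        using P by (simp add: poisson_pp_def)
      moreover have "disjoint_family_on (\<lambda>i. B (h i)) I"
        using D h unfolding disjoint_family_on_def bij_betw_def inj_on_def I_def
        by (metis (no_types, lifting) imageI)
      ultimately show ?thesis using B hI by (auto simp: I_def)
    qed
    have set_eq: "{\<omega>\<in>space M. \<forall>c\<in>J. card (Phi \<omega> \<inter> B c) = a c}
       = (\<Inter>i\<in>I. (\<lambda>\<omega>. card (Phi \<omega> \<inter> B (h i))) -` {a (h i)} \<inter> space M)"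
    proof -
      have "J = h ` I" using h by (simp add: bij_betw_def I_def)
      then show ?thesis using I0 by auto
    qed
    have "prob (\<Inter>i\<in>I. (\<lambda>\<omega>. card (Phi \<omega> \<inter> B (h i))) -` {a (h i)} \<inter> space M)
        = (\<Prod>i\<in>I. prob ((\<lambda>\<omega>. card (Phi \<omega> \<inter> B (h i))) -` {a (h i)} \<inter> space M))"
      by (rule indep_varsD_finite[OF ind I0]) (auto simp: I_def)
    also have "\<dots> = (\<Prod>i\<in>I. pois lam (measure lborel (B (h i))) (a (h i)))"
    proof (rule prod.cong[OF refl])
      fix i assume "i \<in> I"
      have "(\<lambda>\<omega>. card (Phi \<omega> \<inter> B (h i))) -` {a (h i)} \<inter> space M = {\<omega>\<in>space M. card (Phi \<omega> \<inter> B (h i)) = a (h i)}"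
        by auto
      then show "prob ((\<lambda>\<omega>. card (Phi \<omega> \<inter> B (h i))) -` {a (h i)} \<inter> space M) = pois lam (measure lborel (B (h i))) (a (h i))"
        using pc[OF hI[OF \<open>i \<in> I\<close>]] by simp
    qed
    also have "\<dots> = (\<Prod>c\<in>J. pois lam (measure lborel (B c)) (a c))"
      using prod.reindex_bij_betw[OF h, of "\<lambda>c. pois lam (measure lborel (B c)) (a c)"] by (simp add: I_def)
    finally have m: "measure M {\<omega>\<in>space M. \<forall>c\<in>J. card (Phi \<omega> \<inter> B c) = a c} = (\<Prod>c\<in>J. pois lam (measure lborel (B c)) (a c))"
      using set_eq by simp
    have "{\<omega>\<in>space M. \<forall>c\<in>J. card (Phi \<omega> \<inter> B c) = a c} \<in> sets M"
    proof -
      have "{\<omega>\<in>space M. \<forall>c\<in>J. card (Phi \<omega> \<inter> B c) = a c} = space M \<inter> (\<Inter>c\<in>J. {\<omega>\<in>space M. card (Phi \<omega> \<inter> B c) = a c})"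
        by auto
      also have "\<dots> \<in> sets M" using ev J False by (intro sets.Int sets.top sets.finite_INT) auto
      finally show ?thesis .
    qed
    with m show ?thesis by simp
  qed
qed


definition fib :: "(nat \<Rightarrow> int \<times> int) \<Rightarrow> nat \<Rightarrow> int \<times> int \<Rightarrow> nat" where
  "fib g k c = card {i\<in>{..<k}. g i = c}"

definition Cs :: "real \<Rightarrow> real \<Rightarrow> real \<Rightarrow> pt list \<Rightarrow> nat \<Rightarrow> (int \<times> int) set" where
  "Cs dv s eps xs i = {c \<in> Ix dv s. cell dv s c \<inter> cball (xs!i) (eps+s) \<noteq> {}}"

definition Gs :: "'w measure \<Rightarrow> ('w \<Rightarrow> pt set) \<Rightarrow> real \<Rightarrow> real \<Rightarrow> real \<Rightarrow> pt list \<Rightarrow> 'w set" where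
  "Gs M Phi dv s eps xs = (\<Union>g\<in>PiE {..<length xs} (Cs dv s eps xs).
     {\<omega>\<in>space M. \<forall>c\<in>Ix dv s. card (Phi \<omega> \<inter> cell dv s c) = fib g (length xs) c})"

lemma finite_Cs: "finite (Cs dv s eps xs i)"
  by (rule finite_subset[OF _ finite_Ix[of dv s]]) (auto simp: Cs_def)

lemma cell_config:
  assumes P: "poisson_pp M lam Phi"
  shows "{\<omega>\<in>space M. \<forall>c\<in>Ix dv s. card (Phi \<omega> \<inter> cell dv s c) = a c} \<in> sets M \<and>
    measure M {\<omega>\<in>space M. \<forall>c\<in>Ix dv s. card (Phi \<omega> \<inter> cell dv s c) = a c}
     = (\<Prod>c\<in>Ix dv s. pois lam (measure lborel (cell dv s c)) (a c))"
  by (rule poisson_config[OF P finite_Ix]) (auto simp: cell_sets[simplified] cell_bounded disjoint_family_on_def cell_disj)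

lemma Gs_sets:
  assumes P: "poisson_pp M lam Phi"
  shows "Gs M Phi dv s eps xs \<in> sets M"
  unfolding Gs_def
  by (intro sets.finite_UN finite_PiE finite_Cs) (use cell_config[OF P] in auto)

lemma cells_union_measure:
  assumes "C \<subseteq> Ix dv s"
  shows "(\<Sum>c\<in>C. measure lborel (cell dv s c)) = measure lborel (\<Union>c\<in>C. cell dv s c)"
proof -
  have fC: "finite C" using assms finite_subset finite_Ix by blast
  show ?thesis
  proof (rule measure_finite_Union[symmetric])
    show "finite C" by (rule fC)
    show "(\<lambda>c. cell dv s c) ` C \<subseteq> sets lborel" using cell_sets by blast
    show "disjoint_family_on (\<lambda>c. cell dv s c) C"
      by (auto simp: disjoint_family_on_def cell_disj)
    show "\<And>c. c \<in> C \<Longrightarrow> emeasure lborel (cell dv s c) \<noteq> \<infinity>"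
      using emeasure_bounded_finite[OF cell_bounded] by (simp add: less_top)
  qed
qed

lemma Cs_sum_bound:
  assumes "s > 0" "eps \<ge> 0"
  shows "(\<Sum>c\<in>Cs dv s eps xs i. measure lborel (cell dv s c)) \<le> pi * (eps + 3 * s)^2"
proof -
  have sub: "(\<Union>c\<in>Cs dv s eps xs i. cell dv s c) \<subseteq> cball (xs!i) (eps + 3 * s)"
  proof
    fix y assume "y \<in> (\<Union>c\<in>Cs dv s eps xs i. cell dv s c)"
    then obtain c z where c: "y \<in> cell dv s c" "z \<in> cell dv s c" "z \<in> cball (xs!i) (eps+s)"
      by (auto simp: Cs_def)
    have "norm (y - z) < 2 * s" by (rule cell_diam[OF assms(1) c(1,2)])
    moreover have "dist (xs!i) z \<le> eps + s" using c(3) by simp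
    ultimately have "dist (xs!i) y \<le> eps + 3 * s"
      using dist_triangle[of "xs!i" y z] by (simp add: dist_norm norm_minus_commute)
    then show "y \<in> cball (xs!i) (eps + 3 * s)" by simp
  qed
  have "(\<Sum>c\<in>Cs dv s eps xs i. measure lborel (cell dv s c)) = measure lborel (\<Union>c\<in>Cs dv s eps xs i. cell dv s c)"
    by (rule cells_union_measure) (auto simp: Cs_def)
  also have "\<dots> \<le> measure lborel (cball (xs!i) (eps + 3 * s))"
  proof (rule measure_mono_fmeasurable[OF sub])
    show "(\<Union>c\<in>Cs dv s eps xs i. cell dv s c) \<in> sets lborel"
      using cell_sets finite_Cs by (intro sets.finite_UN) auto
    show "cball (xs ! i) (eps + 3 * s) \<in> fmeasurable lborel"
      proof -
      have "emeasure lborel (cball (xs ! i) (eps + 3 * s)) < \<infinity>"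
        by (rule emeasure_bounded_finite[OF bounded_cball])
      moreover have "cball (xs ! i) (eps + 3 * s) \<in> sets lborel" by simp
      ultimately show ?thesis unfolding fmeasurable_def by blast
    qed
  qed
  also have "\<dots> = pi * (eps + 3 * s)^2" using assms by (intro content_cball2) simp
  finally show ?thesis .
qed

lemma pois_le:
  assumes "lam > 0" "mu \<ge> 0"
  shows "pois lam mu n \<le> exp (- (lam * mu)) * lam ^ n * mu ^ n"
proof -
  have "(lam * mu) ^ n / fact n \<le> (lam * mu) ^ n"
    using assms by (smt (verit, best) div_by_1 fact_ge_1 frac_le zero_le_mult_iff zero_le_power)
  then have "exp (- (lam * mu)) * ((lam * mu) ^ n / fact n) \<le> exp (- (lam * mu)) * (lam * mu) ^ n"
    by (intro mult_left_mono) auto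
  then show ?thesis by (simp add: pois_def power_mult_distrib mult.assoc)
qed

lemma pois_nonneg: "lam \<ge> 0 \<Longrightarrow> mu \<ge> 0 \<Longrightarrow> pois lam mu n \<ge> 0"
  by (simp add: pois_def)

lemma config_alg:
  assumes "lam > 0" "s > 0" "dv > 0" "g ` {..<k} \<subseteq> Ix dv s"
  shows "(\<Prod>c\<in>Ix dv s. pois lam (measure lborel (cell dv s c)) (fib g k c))
     \<le> exp (- (lam * pi * dv ^ 2)) * lam ^ k * (\<Prod>i<k. measure lborel (cell dv s (g i)))"
proof -
  let ?mu = "\<lambda>c. measure lborel (cell dv s c)"
  have "(\<Prod>c\<in>Ix dv s. pois lam (?mu c) (fib g k c))
     \<le> (\<Prod>c\<in>Ix dv s. exp (- (lam * ?mu c)) * lam ^ fib g k c * ?mu c ^ fib g k c)"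
    by (intro prod_mono conjI pois_le pois_nonneg assms) (use assms in auto)
  also have "\<dots> = (\<Prod>c\<in>Ix dv s. exp (- (lam * ?mu c))) * (\<Prod>c\<in>Ix dv s. lam ^ fib g k c) * (\<Prod>c\<in>Ix dv s. ?mu c ^ fib g k c)"
    by (simp add: prod.distrib)
  also have "(\<Prod>c\<in>Ix dv s. exp (- (lam * ?mu c))) = exp (- (lam * pi * dv ^ 2))"
  proof -
    have "(\<Prod>c\<in>Ix dv s. exp (- (lam * ?mu c))) = exp (\<Sum>c\<in>Ix dv s. - (lam * ?mu c))"
      by (simp add: exp_sum finite_Ix)
    also have "(\<Sum>c\<in>Ix dv s. - (lam * ?mu c)) = - (lam * (\<Sum>c\<in>Ix dv s. ?mu c))"
      by (simp add: sum_distrib_left sum_negf)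
    also have "\<dots> = - (lam * pi * dv ^ 2)" using cell_measure_sum[of s dv] assms by simp
    finally show ?thesis .
  qed
  also have "(\<Prod>c\<in>Ix dv s. lam ^ fib g k c) = lam ^ k"
  proof -
    have "(\<Sum>c\<in>Ix dv s. fib g k c) = (\<Sum>c\<in>Ix dv s. sum (\<lambda>_. 1::nat) {i\<in>{..<k}. g i = c})"
      by (simp add: fib_def)
    also have "\<dots> = sum (\<lambda>_. 1::nat) {..<k}"
      by (rule sum.group) (use assms finite_Ix in auto)
    finally show ?thesis by (simp add: power_sum[symmetric])
  qed
  also have "(\<Prod>c\<in>Ix dv s. ?mu c ^ fib g k c) = (\<Prod>i<k. ?mu (g i))"
  proof -
    have "(\<Prod>c\<in>Ix dv s. ?mu c ^ fib g k c) = (\<Prod>c\<in>Ix dv s. prod (\<lambda>i. ?mu (g i)) {i\<in>{..<k}. g i = c})"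
      by (intro prod.cong refl) (simp add: fib_def)
    also have "\<dots> = (\<Prod>i<k. ?mu (g i))"
      by (rule prod.group) (use assms finite_Ix in auto)
    finally show ?thesis .
  qed
  finally show ?thesis by simp
qed

lemma Gs_bound:
  assumes P: "poisson_pp M lam Phi" and "lam > 0" "s > 0" "dv > 0" "eps \<ge> 0"
  shows "measure M (Gs M Phi dv s eps xs)
     \<le> exp (- (lam * pi * dv ^ 2)) * lam ^ length xs * (pi * (eps + 3 * s)^2) ^ length xs"
proof -
  interpret prob_space M using P by (simp add: poisson_pp_def)
  let ?k = "length xs"
  let ?mu = "\<lambda>c. measure lborel (cell dv s c)"
  let ?E = "\<lambda>g. {\<omega>\<in>space M. \<forall>c\<in>Ix dv s. card (Phi \<omega> \<inter> cell dv s c) = fib g ?k c}"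
  let ?PI = "PiE {..<?k} (Cs dv s eps xs)"
  have fPI: "finite ?PI" by (intro finite_PiE finite_Cs) auto
  have "measure M (Gs M Phi dv s eps xs) \<le> (\<Sum>g\<in>?PI. measure M (?E g))"
    unfolding Gs_def
    by (rule finite_measure_subadditive_finite[OF fPI]) (use cell_config[OF P] in auto)
  also have "\<dots> \<le> (\<Sum>g\<in>?PI. exp (- (lam * pi * dv ^ 2)) * lam ^ ?k * (\<Prod>i<?k. ?mu (g i)))"
  proof (rule sum_mono)
    fix g assume g: "g \<in> ?PI"
    have "g ` {..<?k} \<subseteq> Ix dv s" using g by (auto simp: PiE_def Pi_def Cs_def)
    then show "measure M (?E g) \<le> exp (- (lam * pi * dv ^ 2)) * lam ^ ?k * (\<Prod>i<?k. ?mu (g i))"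
      using cell_config[OF P, of dv s "fib g ?k"] config_alg[of lam s dv g ?k] assms by simp
  qed
  also have "\<dots> = exp (- (lam * pi * dv ^ 2)) * lam ^ ?k * (\<Sum>g\<in>?PI. \<Prod>i<?k. ?mu (g i))"
    by (simp add: sum_distrib_left)
  also have "(\<Sum>g\<in>?PI. \<Prod>i<?k. ?mu (g i)) = (\<Prod>i<?k. \<Sum>c\<in>Cs dv s eps xs i. ?mu c)"
    by (rule prod_sum_PiE[symmetric]) (auto simp: finite_Cs)
  also have "\<dots> \<le> (\<Prod>i<?k. pi * (eps + 3 * s)^2)"
    by (intro prod_mono conjI sum_nonneg Cs_sum_bound assms) auto
  also have "\<dots> = (pi * (eps + 3 * s)^2) ^ ?k" by simp
  finally show ?thesis
    using assms by (simp add: mult_left_mono)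
qed


lemma sum_fib:
  assumes "g ` {..<k} \<subseteq> Ix dv s"
  shows "(\<Sum>c\<in>Ix dv s. fib g k c) = k"
proof -
  have "(\<Sum>c\<in>Ix dv s. fib g k c) = (\<Sum>c\<in>Ix dv s. sum (\<lambda>_. 1::nat) {i\<in>{..<k}. g i = c})"
    by (simp add: fib_def)
  also have "\<dots> = sum (\<lambda>_. 1::nat) {..<k}"
    by (rule sum.group) (use assms finite_Ix in auto)
  finally show ?thesis by simp
qed

lemma finite_cell_part: "finite (P \<inter> cball 0 dv) \<Longrightarrow> finite (P \<inter> cell dv s c)"
  by (rule finite_subset[of _ "P \<inter> cball 0 dv"]) (auto simp: cell_def)

lemma sum_card_cells:
  assumes "s > 0" "finite (P \<inter> cball 0 dv)"
  shows "(\<Sum>c\<in>Ix dv s. card (P \<inter> cell dv s c)) = card (P \<inter> cball 0 dv)"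
proof -
  have "card (\<Union>c\<in>Ix dv s. P \<inter> cell dv s c) = (\<Sum>c\<in>Ix dv s. card (P \<inter> cell dv s c))"
  proof (rule card_UN_disjoint[OF finite_Ix])
    show "\<forall>i\<in>Ix dv s. finite (P \<inter> cell dv s i)"
      using assms(2) finite_cell_part by blast
    show "\<forall>i\<in>Ix dv s. \<forall>j\<in>Ix dv s. i \<noteq> j \<longrightarrow> P \<inter> cell dv s i \<inter> (P \<inter> cell dv s j) = {}"
      using cell_disj by blast
  qed
  moreover have "(\<Union>c\<in>Ix dv s. P \<inter> cell dv s c) = P \<inter> cball 0 dv"
    using cell_union[OF assms(1), of dv] by blast
  ultimately show ?thesis by simp
qed

lemma sum_le_eq_imp_eq:
  fixes a b :: "'c \<Rightarrow> nat"
  assumes "finite I" "\<And>c. c \<in> I \<Longrightarrow> a c \<le> b c" "sum a I = sum b I" "c \<in> I"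
  shows "a c = b c"
proof (rule ccontr)
  assume "a c \<noteq> b c"
  then have "a c < b c" using assms(2,4) le_neq_implies_less by blast
  then have "sum a I < sum b I"
    using assms by (intro sum_strict_mono_ex1) auto
  then show False using assms(3) by simp
qed

lemma finite_visible:
  assumes P: "poisson_pp M lam Phi" and "\<omega> \<in> space M"
  shows "finite (Phi \<omega> \<inter> cball 0 dv)"
proof -
  have "\<forall>\<omega>\<in>space M. \<forall>B. bounded B \<longrightarrow> finite (Phi \<omega> \<inter> B)"
    using P by (simp add: poisson_pp_def)
  then show ?thesis using assms(2) bounded_cball by blast
qed

lemma E_sub_G:
  assumes P: "poisson_pp M lam Phi" and s: "s > 0" and eps: "eps \<ge> 0"
    and \<omega>: "\<omega> \<in> space M" and D: "Delta_s (orderings xs) (meas_F dv (Phi \<omega>)) \<le> ereal eps"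
  shows "\<omega> \<in> Gs M Phi dv s eps xs"
proof -
  define k where "k = length xs"
  define P where "P = Phi \<omega>"
  have fin: "finite (P \<inter> cball 0 dv)" using finite_visible[OF P \<omega>] by (simp add: P_def)
  have "ereal eps < ereal (eps + s)" using s by simp
  then have "Delta_s (orderings xs) (meas_F dv P) < ereal (eps + s)"
    using D unfolding P_def by (rule le_less_trans[rotated])
  then have "\<exists>v\<in>orderings xs. (INF w\<in>meas_F dv P. Delta_v v w) < ereal (eps + s)"
    unfolding Delta_s_def by (rule INF_less_iff[THEN iffD1])
  then obtain v where v: "v \<in> orderings xs" and "(INF w\<in>meas_F dv P. Delta_v v w) < ereal (eps + s)"
    by blast
  then obtain w where w: "w \<in> meas_F dv P" and vw: "Delta_v v w < ereal (eps + s)"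
    using INF_less_iff[THEN iffD1] by blast
  have mv: "mset xs = mset v" using v by (simp add: orderings_def)
  have lv: "length v = k" using mset_eq_length[OF mv] by (simp add: k_def)
  have lw: "length w = k" using vw lv by (auto simp: Delta_v_def split: if_splits)
  have dw: "distinct w" and sw: "set w = P \<inter> cball 0 dv" using w by (auto simp: meas_F_def)
  have close: "norm (v!j - w!j) < eps + s" if "j < k" for j
  proof -
    have ne: "v \<noteq> []" using that lv by auto
    have "Delta_v v w = ereal (Max {norm (v ! i - w ! i) | i. i < length v})"
      using lv lw ne by (simp add: Delta_v_def)
    then have "Max {norm (v ! i - w ! i) | i. i < length v} < eps + s" using vw by simp
    moreover have "norm (v ! j - w ! j) \<le> Max {norm (v ! i - w ! i) | i. i < length v}"
      by (rule Max_ge) (use that lv in auto)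
    ultimately show ?thesis by simp
  qed
  obtain f where f: "bij_betw f {..<k} {..<k}" and fx: "\<And>i. i < k \<Longrightarrow> xs ! i = v ! (f i)"
    using permutation_Ex_bij[OF mv] lv by (auto simp: k_def)
  have fk: "i < k \<Longrightarrow> f i < k" for i using f by (auto simp: bij_betw_def)
  define g where "g i = (if i < k then idx s (w ! (f i)) else undefined)" for i
  have wD: "i < k \<Longrightarrow> w ! (f i) \<in> P \<inter> cball 0 dv" for i using sw lw fk by (metis nth_mem)
  have wcell: "i < k \<Longrightarrow> w ! (f i) \<in> cell dv s (g i)" for i
    using wD by (auto simp: g_def cell_def)
  have gI: "i < k \<Longrightarrow> g i \<in> Ix dv s" for i
    using wD idx_in_Ix[OF s] by (auto simp: g_def)
  have gC: "i < k \<Longrightarrow> g i \<in> Cs dv s eps xs i" for i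
  proof -
    assume i: "i < k"
    have "dist (xs ! i) (w ! (f i)) < eps + s"
      using close[OF fk[OF i]] fx[OF i] by (simp add: dist_norm)
    then have "w ! (f i) \<in> cball (xs ! i) (eps + s)" by simp
    then show ?thesis using wcell[OF i] gI[OF i] by (auto simp: Cs_def)
  qed
  have gPi: "g \<in> PiE {..<length xs} (Cs dv s eps xs)"
    using gC by (auto simp: PiE_def extensional_def g_def k_def)
  have le: "fib g k c \<le> card (P \<inter> cell dv s c)" if c: "c \<in> Ix dv s" for c
  proof -
    have "card {i\<in>{..<k}. g i = c} \<le> card (P \<inter> cell dv s c)"
    proof (rule card_inj_on_le[where f = "\<lambda>i. w ! (f i)"])
      show "inj_on (\<lambda>i. w ! (f i)) {i \<in> {..<k}. g i = c}"
        using f dw lw fk by (auto simp: inj_on_def bij_betw_def nth_eq_iff_index_eq)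
      show "(\<lambda>i. w ! (f i)) ` {i \<in> {..<k}. g i = c} \<subseteq> P \<inter> cell dv s c"
        using wD wcell by auto
      show "finite (P \<inter> cell dv s c)"
        using fin by (rule finite_cell_part)
    qed
    then show ?thesis by (simp add: fib_def)
  qed
  have gsub: "g ` {..<k} \<subseteq> Ix dv s" using gI by auto
  have "(\<Sum>c\<in>Ix dv s. fib g k c) = (\<Sum>c\<in>Ix dv s. card (P \<inter> cell dv s c))"
    using sum_fib[OF gsub] sum_card_cells[OF s fin] distinct_card[OF dw] sw lw by simp
  then have eq: "\<forall>c\<in>Ix dv s. card (P \<inter> cell dv s c) = fib g k c"
    using sum_le_eq_imp_eq[OF finite_Ix[of dv s], where a="fib g k" and b="\<lambda>c. card (P \<inter> cell dv s c)", OF le]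
    by (metis (no_types, lifting))
  show ?thesis unfolding Gs_def using gPi eq \<omega> by (auto simp: P_def k_def)
qed


lemma G_Delta:
  assumes P: "poisson_pp M lam Phi" and s: "s > 0" and eps: "eps \<ge> 0"
    and G: "\<omega> \<in> Gs M Phi dv s eps xs"
  shows "Delta_s (orderings xs) (meas_F dv (Phi \<omega>)) \<le> ereal (eps + 3 * s)"
proof -
  define k where "k = length xs"
  define P where "P = Phi \<omega>"
  obtain g where gPi: "g \<in> PiE {..<k} (Cs dv s eps xs)" and \<omega>: "\<omega> \<in> space M"
    and eq: "\<forall>c\<in>Ix dv s. card (P \<inter> cell dv s c) = fib g k c"
    using G unfolding Gs_def by (auto simp: P_def k_def)
  have fin: "finite (P \<inter> cball 0 dv)" using finite_visible[OF P \<omega>] by (simp add: P_def)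
  have gC: "i < k \<Longrightarrow> g i \<in> Cs dv s eps xs i" for i using gPi by auto
  have gI: "i < k \<Longrightarrow> g i \<in> Ix dv s" for i using gC by (auto simp: Cs_def)
  have "\<exists>F. F ` {i\<in>{..<k}. g i = c} \<subseteq> P \<inter> cell dv s c \<and> inj_on F {i\<in>{..<k}. g i = c}"
    if c: "c \<in> Ix dv s" for c
  proof (rule card_le_inj)
    show "finite {i\<in>{..<k}. g i = c}" by simp
    show "finite (P \<inter> cell dv s c)" by (rule finite_cell_part[OF fin])
    show "card {i\<in>{..<k}. g i = c} \<le> card (P \<inter> cell dv s c)"
      using eq c unfolding fib_def by simp
  qed
  then have "\<forall>c\<in>Ix dv s. \<exists>F. F ` {i\<in>{..<k}. g i = c} \<subseteq> P \<inter> cell dv s c \<and> inj_on F {i\<in>{..<k}. g i = c}"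
    by blast
  from bchoice[OF this] obtain F where
    F0: "\<forall>c\<in>Ix dv s. F c ` {i\<in>{..<k}. g i = c} \<subseteq> P \<inter> cell dv s c \<and> inj_on (F c) {i\<in>{..<k}. g i = c}"
    by blast
  have F: "\<And>c. c \<in> Ix dv s \<Longrightarrow> F c ` {i\<in>{..<k}. g i = c} \<subseteq> P \<inter> cell dv s c \<and> inj_on (F c) {i\<in>{..<k}. g i = c}"
    using F0 by blast
  define h where "h i = F (g i) i" for i
  have hP: "h i \<in> P \<inter> cell dv s (g i)" if i: "i < k" for i
  proof -
    have "F (g i) ` {l\<in>{..<k}. g l = g i} \<subseteq> P \<inter> cell dv s (g i)"
      using F[OF gI[OF i]] by (rule conjunct1)
    moreover have "i \<in> {l\<in>{..<k}. g l = g i}" using i by simp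
    ultimately show ?thesis unfolding h_def by (rule subsetD[OF _ imageI])
  qed
  have inj: "inj_on h {..<k}"
  proof (rule inj_onI)
    fix i j assume i: "i \<in> {..<k}" and j: "j \<in> {..<k}" and hij: "h i = h j"
    have a: "h i \<in> cell dv s (g i)" using hP i by simp
    have b: "h i \<in> cell dv s (g j)" using hP j hij by simp
    have gij: "g i = g j"
    proof (rule ccontr)
      assume "g i \<noteq> g j"
      then have "cell dv s (g i) \<inter> cell dv s (g j) = {}" by (rule cell_disj)
      then show False using a b by blast
    qed
    have "inj_on (F (g i)) {l\<in>{..<k}. g l = g i}"
      using F[OF gI] i by simp
    moreover have "F (g i) i = F (g i) j" using hij gij by (simp add: h_def)
    ultimately show "i = j" using i j gij by (auto dest: inj_onD)
  qed
  define w where "w = map h [0..<k]"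
  have lw: "length w = k" by (simp add: w_def)
  have dw: "distinct w" using inj by (simp add: w_def distinct_map atLeast0LessThan)
  have sub: "set w \<subseteq> P \<inter> cball 0 dv" using hP by (auto simp: w_def cell_def)
  have "card (P \<inter> cball 0 dv) = k"
  proof -
    have gsub: "g ` {..<k} \<subseteq> Ix dv s" using gI by auto
    have "card (P \<inter> cball 0 dv) = (\<Sum>c\<in>Ix dv s. card (P \<inter> cell dv s c))"
      using sum_card_cells[OF s fin] by simp
    also have "\<dots> = (\<Sum>c\<in>Ix dv s. fib g k c)" using eq by simp
    also have "\<dots> = k" by (rule sum_fib[OF gsub])
    finally show ?thesis .
  qed
  then have sw: "set w = P \<inter> cball 0 dv"
    using card_subset_eq[OF fin sub] distinct_card[OF dw] lw by simp
  have wF: "w \<in> meas_F dv P" using dw sw by (simp add: meas_F_def)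
  have xo: "xs \<in> orderings xs" by (simp add: orderings_def)
  have dist_b: "norm (xs ! i - w ! i) \<le> eps + 3 * s" if i: "i < k" for i
  proof -
    obtain z where z: "z \<in> cell dv s (g i)" "z \<in> cball (xs ! i) (eps + s)"
      using gC[OF i] by (auto simp: Cs_def)
    have "norm (h i - z) < 2 * s" using cell_diam[OF s _ z(1)] hP[OF i] by blast
    moreover have "dist (xs ! i) z \<le> eps + s" using z(2) by simp
    ultimately have "dist (xs ! i) (h i) \<le> eps + 3 * s"
      using dist_triangle[of "xs!i" "h i" z] by (simp add: dist_norm norm_minus_commute)
    then show ?thesis using i by (simp add: w_def dist_norm)
  qed
  have DV: "Delta_v xs w \<le> ereal (eps + 3 * s)"
  proof (cases "xs = []")
    case True
    then show ?thesis using lw eps s by (simp add: Delta_v_def k_def)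
  next
    case False
    have "Max {norm (xs ! i - w ! i) | i. i < length xs} \<le> eps + 3 * s"
    proof (rule Max.boundedI)
      have "{norm (xs ! i - w ! i) | i. i < length xs} = (\<lambda>i. norm (xs ! i - w ! i)) ` {..<length xs}"
        by auto
      then show "finite {norm (xs ! i - w ! i) | i. i < length xs}" by simp
      show "{norm (xs ! i - w ! i) | i. i < length xs} \<noteq> {}" using False by auto
      show "\<And>a. a \<in> {norm (xs ! i - w ! i) | i. i < length xs} \<Longrightarrow> a \<le> eps + 3 * s"
        using dist_b by (auto simp: k_def)
    qed
    then show ?thesis using False lw by (simp add: Delta_v_def k_def)
  qed
  have "Delta_s (orderings xs) (meas_F dv P) \<le> (INF w\<in>meas_F dv P. Delta_v xs w)"
    unfolding Delta_s_def by (rule INF_lower[OF xo])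
  also have "\<dots> \<le> Delta_v xs w" by (rule INF_lower[OF wF])
  also have "\<dots> \<le> ereal (eps + 3 * s)" by (rule DV)
  finally show ?thesis by (simp add: P_def)
qed


theorem lemma8:
  fixes M :: "'w measure" and Phi :: "'w \<Rightarrow> pt set"
    and lam dv eps :: real and xs :: "pt list"
  assumes "poisson_pp M lam Phi" and "lam > 0" and "dv > 0" and "eps \<ge> 0"
  defines "m \<equiv> lam * pi * dv ^ 2"
  shows "{\<omega>\<in>space M. Delta_s (orderings xs) (meas_F dv (Phi \<omega>)) \<le> ereal eps} \<in> sets M \<and>
         measure M {\<omega>\<in>space M. Delta_s (orderings xs) (meas_F dv (Phi \<omega>)) \<le> ereal eps}
           \<le> m ^ length xs * exp (- m) *
             (\<Prod>i<length xs. measure lborel (cball (xs ! i) eps) / (pi * dv ^ 2))"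
proof -
  note P = assms(1)
  interpret prob_space M using P by (simp add: poisson_pp_def)
  define E where "E = {\<omega>\<in>space M. Delta_s (orderings xs) (meas_F dv (Phi \<omega>)) \<le> ereal eps}"
  define sq where "sq n = inverse (real (Suc n))" for n
  have sq_pos: "sq n > 0" for n by (simp add: sq_def)
  define G where "G n = Gs M Phi dv (sq n) eps xs" for n
  have Gsets: "G n \<in> sets M" for n unfolding G_def by (rule Gs_sets[OF P])
  have EG: "E \<subseteq> G n" for n
    using E_sub_G[OF P sq_pos assms(4)] by (auto simp: E_def G_def)
  have GE: "space M \<inter> (\<Inter>n. G n) \<subseteq> E"
  proof
    fix \<omega> assume w: "\<omega> \<in> space M \<inter> (\<Inter>n. G n)"
    have b: "Delta_s (orderings xs) (meas_F dv (Phi \<omega>)) \<le> ereal (eps + 3 * sq n)" for n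
      using G_Delta[OF P sq_pos assms(4)] w by (auto simp: G_def)
    have "Delta_s (orderings xs) (meas_F dv (Phi \<omega>)) \<le> ereal eps"
    proof (rule ereal_le_epsilon2)
      fix e :: real assume e: "e > 0"
      obtain n where n: "3 / e < real n" using reals_Archimedean2 by blast
      have "3 / e < real (Suc n)" using n by simp
      then have "3 < e * real (Suc n)" using e by (simp add: field_simps)
      then have "3 * sq n < e" by (simp add: sq_def field_simps)
      then have "ereal (eps + 3 * sq n) \<le> ereal eps + ereal e" by simp
      then show "Delta_s (orderings xs) (meas_F dv (Phi \<omega>)) \<le> ereal eps + ereal e"
        using b[of n] by (rule order.trans[rotated])
    qed
    then show "\<omega> \<in> E" using w by (simp add: E_def)
  qed
  have Eeq: "E = space M \<inter> (\<Inter>n. G n)"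
    using GE EG by (auto simp: E_def)
  have Esets: "E \<in> sets M"
    unfolding Eeq using Gsets by (intro sets.Int sets.top sets.countable_INT) auto
  define B where "B t = exp (- (lam * pi * dv ^ 2)) * lam ^ length xs * (pi * (eps + 3 * t)^2) ^ length xs" for t
  have bound: "measure M E \<le> B (sq n)" for n
  proof -
    have "measure M E \<le> measure M (G n)" by (rule finite_measure_mono[OF EG Gsets])
    also have "\<dots> \<le> B (sq n)" unfolding G_def B_def
      by (rule Gs_bound[OF P assms(2) sq_pos assms(3,4)])
    finally show ?thesis .
  qed
  have "sq \<longlonglongrightarrow> 0" unfolding sq_def by (rule LIMSEQ_inverse_real_of_nat)
  then have "(\<lambda>n. B (sq n)) \<longlonglongrightarrow> B 0" unfolding B_def by (intro tendsto_intros)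
  then have mE: "measure M E \<le> B 0"
    using bound by (intro LIMSEQ_le_const) auto
  have "B 0 = m ^ length xs * exp (- m) *
             (\<Prod>i<length xs. measure lborel (cball (xs ! i) eps) / (pi * dv ^ 2))"
  proof -
    have "(\<Prod>i<length xs. measure lborel (cball (xs ! i) eps) / (pi * dv ^ 2))
        = (pi * eps ^ 2 / (pi * dv ^ 2)) ^ length xs"
      using content_cball2[OF assms(4)] by simp
    moreover have "m * (pi * eps ^ 2 / (pi * dv ^ 2)) = lam * (pi * eps ^ 2)"
      using assms(3) by (simp add: m_def field_simps)
    ultimately show ?thesis
      unfolding B_def m_def
      by (simp add: power_mult_distrib[symmetric] mult_ac)
  qed
  with mE Esets show ?thesis by (simp add: E_def)
qed

end
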